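(* Let $m\ge 2$ and let $q$ be an $m\times m$ matrix each of whose entries is either $0$ or an indeterminate, where the indeterminates occurring in $q$ are pairwise distinct and algebraically independent over $F$ ($F=\mathbb{R}$ or $\mathbb{C}$), and suppose $\det q$ is an irreducible polynomial. Then for almost all assignments of values to the indeterminates satisfying the constraint $\det q=0$ — precisely, for every assignment with $\det q=0$ at which a certain polynomial $P$ not divisible by $\det q$ does not vanish — every nonzero vector $\psi\in F^m$ with $q\psi=0$ has $\psi_j\neq 0$ for every index $j=1,\dots,m$.
   Context: The matrix $q$ is the off-diagonal block of a chiral tight-binding Hamiltonian on a bipartite graph (rows indexed by white sites, columns by black sites, entry an independent indeterminate "hopping term" if the sites are adjacent, $0$ otherwise). A vector $\psi$ with $q\psi=0$ is a zero energy (null) state supported on one sublattice; the claim is that it has nonzero amplitude on every site of that sublattice. *)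

theory Defs
  imports "Jordan_Normal_Form.Determinant" "HOL-Library.Poly_Mapping"
          "HOL-Computational_Algebra.Factorial_Ring"
begin

type_synonym ('v, 'a) mpoly = "('v \<Rightarrow>\<^sub>0 nat) \<Rightarrow>\<^sub>0 'a"

definition mvar :: "'v \<Rightarrow> ('v, 'a::{zero,one}) mpoly" where
  "mvar v = Poly_Mapping.single (Poly_Mapping.single v 1) 1"

definition mpoly_eval :: "('v \<Rightarrow> 'a) \<Rightarrow> ('v, 'a::comm_semiring_1) mpoly \<Rightarrow> 'a" where
  "mpoly_eval x p =
     (\<Sum>mn \<in> Poly_Mapping.keys p. Poly_Mapping.lookup p mn * (\<Prod>v \<in> Poly_Mapping.keys mn. x v ^ Poly_Mapping.lookup mn v))"

definition mpoly_vars :: "('v, 'a::zero) mpoly \<Rightarrow> 'v set" where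
  "mpoly_vars p = (\<Union>mn \<in> Poly_Mapping.keys p. Poly_Mapping.keys mn)"

text \<open>Distinct positions carry distinct
  indeterminates, so they are pairwise distinct and algebraically independent.\<close>
definition generic_matrix :: "nat \<Rightarrow> (nat \<times> nat) set \<Rightarrow> (nat \<times> nat, 'a::comm_ring_1) mpoly mat" where
  "generic_matrix m S = mat m m (\<lambda>(i, j). if (i, j) \<in> S then mvar (i, j) else 0)"

definition eval_matrix :: "(nat \<times> nat \<Rightarrow> 'a) \<Rightarrow> (nat \<times> nat, 'a::comm_ring_1) mpoly mat \<Rightarrow> 'a mat" where
  "eval_matrix x q = map_mat (mpoly_eval x) q"

end

theory Submission
  imports Defs "HOL-Library.Product_Lexorder" "Jordan_Normal_Form.DL_Submatrix"
begin


definition mono :: "('v \<Rightarrow> 'b::comm_semiring_1) \<Rightarrow> ('v \<Rightarrow>\<^sub>0 nat) \<Rightarrow> 'b" where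
  "mono x mn = (\<Prod>v\<in>Poly_Mapping.keys mn. x v ^ Poly_Mapping.lookup mn v)"

definition heval :: "('a::comm_semiring_1 \<Rightarrow> 'b::comm_semiring_1) \<Rightarrow> ('v \<Rightarrow> 'b) \<Rightarrow> ('v,'a) mpoly \<Rightarrow> 'b" where
  "heval c x p = (\<Sum>mn\<in>Poly_Mapping.keys p. c (Poly_Mapping.lookup p mn) * mono x mn)"

lemma mono_superset: assumes "finite F" "Poly_Mapping.keys mn \<subseteq> F"
  shows "mono x mn = (\<Prod>v\<in>F. x v ^ Poly_Mapping.lookup mn v)"
  unfolding mono_def using assms
  by (intro prod.mono_neutral_left) (auto simp: in_keys_iff)

lemma mono_add: "mono x (a + b) = mono x a * mono x b"
proof -
  let ?F = "Poly_Mapping.keys a \<union> Poly_Mapping.keys b"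
  have f: "finite ?F" by simp
  have "mono x (a+b) = (\<Prod>v\<in>?F. x v ^ Poly_Mapping.lookup (a+b) v)"
    by (rule mono_superset[OF f]) (rule keys_add)
  also have "\<dots> = (\<Prod>v\<in>?F. x v ^ Poly_Mapping.lookup a v) * (\<Prod>v\<in>?F. x v ^ Poly_Mapping.lookup b v)"
    by (simp add: lookup_add power_add prod.distrib)
  also have "\<dots> = mono x a * mono x b"
    by (subst (1 2) mono_superset[OF f]) auto
  finally show ?thesis .
qed

lemma mono_zero[simp]: "mono x 0 = 1" by (simp add: mono_def)

lemma poly_mapping_sum_singles: "p = (\<Sum>a\<in>Poly_Mapping.keys p. Poly_Mapping.single a (Poly_Mapping.lookup p a))"
proof (rule poly_mapping_eqI)
  fix k
  show "Poly_Mapping.lookup p k = Poly_Mapping.lookup (\<Sum>a\<in>Poly_Mapping.keys p. Poly_Mapping.single a (Poly_Mapping.lookup p a)) k"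
    by (cases "k \<in> Poly_Mapping.keys p") (auto simp: lookup_sum lookup_single when_def in_keys_iff)
qed

context comm_ring_hom begin

lemma heval_superset: assumes "finite F" "Poly_Mapping.keys p \<subseteq> F"
  shows "heval hom x p = (\<Sum>mn\<in>F. hom (Poly_Mapping.lookup p mn) * mono x mn)"
  unfolding heval_def using assms
  by (intro sum.mono_neutral_left) (auto simp: in_keys_iff)

lemma heval_add: "heval hom x (p + q) = heval hom x p + heval hom x q"
proof -
  let ?F = "Poly_Mapping.keys p \<union> Poly_Mapping.keys q"
  have f: "finite ?F" by simp
  have "heval hom x (p+q) = (\<Sum>mn\<in>?F. hom (Poly_Mapping.lookup (p+q) mn) * mono x mn)"
    by (rule heval_superset[OF f]) (rule keys_add)
  also have "\<dots> = (\<Sum>mn\<in>?F. hom (Poly_Mapping.lookup p mn) * mono x mn) + (\<Sum>mn\<in>?F. hom (Poly_Mapping.lookup q mn) * mono x mn)"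
    by (simp add: lookup_add hom_add distrib_right sum.distrib)
  also have "\<dots> = heval hom x p + heval hom x q"
    by (subst (1 2) heval_superset[OF f]) auto
  finally show ?thesis .
qed

lemma heval_zero[simp]: "heval hom x 0 = 0" by (simp add: heval_def)

lemma heval_sum: "heval hom x (sum f A) = (\<Sum>a\<in>A. heval hom x (f a))"
  by (induct A rule: infinite_finite_induct) (auto simp: heval_add)

lemma heval_single[simp]: "heval hom x (Poly_Mapping.single a r) = hom r * mono x a"
  by (simp add: heval_def)

lemma heval_mult: "heval hom x (p * q) = heval hom x p * heval hom x q"
proof -
  have "heval hom x (p * q) = heval hom x ((\<Sum>a\<in>Poly_Mapping.keys p. Poly_Mapping.single a (Poly_Mapping.lookup p a)) * 
      (\<Sum>b\<in>Poly_Mapping.keys q. Poly_Mapping.single b (Poly_Mapping.lookup q b)))"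
    by (subst (1) poly_mapping_sum_singles[of p], subst (1) poly_mapping_sum_singles[of q]) (rule refl)
  also have "\<dots> = (\<Sum>a\<in>Poly_Mapping.keys p. \<Sum>b\<in>Poly_Mapping.keys q. hom (Poly_Mapping.lookup p a) * mono x a * (hom (Poly_Mapping.lookup q b) * mono x b))"
    apply (simp add: sum_distrib_left sum_distrib_right heval_sum mult_single mono_add hom_mult ac_simps)
    apply (subst sum.swap) apply (simp add: ac_simps) done
  also have "\<dots> = heval hom x p * heval hom x q"
    unfolding heval_def sum_distrib_left sum_distrib_right by (rule sum.swap)
  finally show ?thesis .
qed

lemma heval_one[simp]: "heval hom x 1 = 1"
  by (simp add: heval_def)

lemma heval_hom: "comm_ring_hom (heval hom x)"
  by unfold_locales (auto simp: heval_add heval_mult)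

lemma heval_mvar[simp]: "heval hom x (mvar v) = x v"
  by (simp add: mvar_def mono_def)

end

lemma id_hom: "comm_ring_hom (\<lambda>a::'a::comm_ring_1. a)"
  by unfold_locales auto

lemma mpoly_eval_heval: "mpoly_eval x p = heval (\<lambda>a. a) x p"
  by (simp add: mpoly_eval_def heval_def mono_def)

lemma mpoly_eval_hom: "comm_ring_hom (mpoly_eval x)"
  using comm_ring_hom.heval_hom[OF id_hom] by (simp add: mpoly_eval_heval[abs_def])




definition constP :: "'a::comm_ring_1 \<Rightarrow> ('v,'a) mpoly poly" where
  "constP a = [:Poly_Mapping.single 0 a:]"

lemma constP_hom: "comm_ring_hom (constP :: 'a::comm_ring_1 \<Rightarrow> ('v,'a) mpoly poly)"
  by unfold_locales (auto simp: constP_def mult_single single_add mult.commute)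

lemma pconst_hom: "comm_ring_hom (\<lambda>a::'a::comm_ring_1. [:a:])"
  by unfold_locales auto

definition Ev :: "'v \<Rightarrow> ('v,'a::comm_ring_1) mpoly \<Rightarrow> ('v,'a) mpoly poly" where
  "Ev v = heval constP (\<lambda>w. if w = v then [:0,1:] else [:mvar w:])"

lemma Ev_hom: "comm_ring_hom (Ev v)"
  unfolding Ev_def by (rule comm_ring_hom.heval_hom[OF constP_hom])

lemma Ev_mvar: "Ev v (mvar w) = (if w = v then [:0,1:] else [:mvar w:])"
  unfolding Ev_def by (rule comm_ring_hom.heval_mvar[OF constP_hom])

definition avoids :: "'v \<Rightarrow> ('v,'a::comm_ring_1) mpoly \<Rightarrow> bool" where
  "avoids v p \<longleftrightarrow> p = 0 \<or> (\<exists>w. w \<noteq> v \<and> p = mvar w)"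

lemma Ev_avoids: "avoids v p \<Longrightarrow> Ev v p = [:p:]"
proof -
  interpret E: comm_ring_hom "Ev v" by (rule Ev_hom)
  show "avoids v p \<Longrightarrow> Ev v p = [:p:]" unfolding avoids_def by (auto simp: Ev_mvar)
qed

lemma Ev_det_avoids:
  assumes "\<And>i j. i < dim_row M \<Longrightarrow> j < dim_col M \<Longrightarrow> avoids v (M $$ (i,j))"
  shows "Ev v (det M) = [:det M:]"
proof -
  have "map_mat (Ev v) M = map_mat (\<lambda>a. [:a:]) M"
    by (rule eq_matI) (auto simp: Ev_avoids assms)
  hence "det (map_mat (Ev v) M) = det (map_mat (\<lambda>a. [:a:]) M)" by simp
  thus ?thesis
    by (simp add: comm_ring_hom.hom_det[OF Ev_hom] comm_ring_hom.hom_det[OF pconst_hom])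
qed

lemma Ev_cofactor_avoids:
  assumes "\<And>i j. i < dim_row M \<Longrightarrow> j < dim_col M \<Longrightarrow> i \<noteq> 0 \<Longrightarrow> avoids v (M $$ (i,j))"
    and "j0 < dim_col M"
  shows "Ev v (cofactor M 0 j0) = [:cofactor M 0 j0:]"
proof -
  have h1: "Ev v (det (mat_delete M 0 j0)) = [:det (mat_delete M 0 j0):]"
    by (rule Ev_det_avoids) (auto simp: mat_delete_def intro!: assms)
  interpret E: comm_ring_hom "Ev v" by (rule Ev_hom)
  interpret C: comm_ring_hom "\<lambda>a::('a, 'b) mpoly. [:a:]" by (rule pconst_hom)
  have h2: "Ev v ((-1)^j0) = [:(-1)^j0:]"
    by (induct j0) (auto simp: E.hom_mult E.hom_uminus)
  show ?thesis unfolding cofactor_def add_0_left E.hom_mult C.hom_mult h1 h2 ..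
qed

lemma T2:
  assumes B: "B \<in> carrier_mat n n" and n: "0 < n" and j0: "j0 < n"
    and Bv: "B $$ (0,j0) = mvar v"
    and oth: "\<And>i j. i < n \<Longrightarrow> j < n \<Longrightarrow> (i,j) \<noteq> (0,j0) \<Longrightarrow> avoids v (B $$ (i,j))"
  shows "\<exists>b. Ev v (det B) = [: b, cofactor B 0 j0 :]"
proof -
  interpret E: comm_ring_hom "Ev v" by (rule Ev_hom)
  interpret C: comm_ring_hom "\<lambda>a::('a, 'b) mpoly. [:a:]" by (rule pconst_hom)
  have cof: "Ev v (cofactor B 0 j) = [:cofactor B 0 j:]" if "j < n" for j
    using B that by (intro Ev_cofactor_avoids) (auto intro!: oth)
  have "det B = (\<Sum>j<n. B $$ (0, j) * cofactor B 0 j)"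
    by (rule laplace_expansion_row[OF B n])
  hence "Ev v (det B) = (\<Sum>j<n. Ev v (B $$ (0, j)) * Ev v (cofactor B 0 j))"
    by (simp add: E.hom_sum E.hom_mult)
  also have "\<dots> = (\<Sum>j<n. Ev v (B $$ (0, j)) * [:cofactor B 0 j:])"
    by (rule sum.cong) (auto simp: cof)
  also have "\<dots> = Ev v (B $$ (0, j0)) * [:cofactor B 0 j0:] + (\<Sum>j\<in>{..<n}-{j0}. Ev v (B $$ (0, j)) * [:cofactor B 0 j:])"
    using j0 by (subst sum.remove[of _ j0]) auto
  also have "(\<Sum>j\<in>{..<n}-{j0}. Ev v (B $$ (0, j)) * [:cofactor B 0 j:]) = (\<Sum>j\<in>{..<n}-{j0}. [:B $$ (0, j) * cofactor B 0 j:])"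
    by (rule sum.cong) (auto simp: Ev_avoids oth n)
  also have "\<dots> = [:\<Sum>j\<in>{..<n}-{j0}. B $$ (0, j) * cofactor B 0 j:]"
    by (simp add: C.hom_sum)
  finally have "Ev v (det B) = [:0,1:] * [:cofactor B 0 j0:] + [:\<Sum>j\<in>{..<n}-{j0}. B $$ (0, j) * cofactor B 0 j:]"
    by (simp add: Bv Ev_mvar)
  thus ?thesis by auto
qed

lemma T2a:
  assumes "\<exists>b. Ev v (det B) = [: b, c :]" "det B = 0"
  shows "c = 0"
proof -
  interpret E: comm_ring_hom "Ev v" by (rule Ev_hom)
  show ?thesis using assms by auto
qed

lemma T2b:
  fixes B :: "('v::linorder, 'a::idom) mpoly mat"
  assumes "\<exists>b. Ev v (det B) = [: b, c :]" "det B dvd P" "P \<noteq> 0" "Ev v P = [:P:]"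
  shows "c = 0"
proof (rule ccontr)
  assume c: "c \<noteq> 0"
  interpret E: comm_ring_hom "Ev v" by (rule Ev_hom)
  from assms(1) obtain b where b: "Ev v (det B) = [: b, c :]" by auto
  from assms(2) obtain Q where Q: "P = det B * Q" by (auto elim: dvdE)
  have "[:P:] = [:b,c:] * Ev v Q"
    using assms(4) Q b by (simp add: E.hom_mult)
  moreover have "Ev v Q \<noteq> 0" using calculation assms(3) by auto
  moreover have "degree ([:b,c:] * Ev v Q) = degree [:b,c:] + degree (Ev v Q)"
    by (rule degree_mult_eq) (use c calculation in auto)
  ultimately have "degree [:P:] = degree [:b,c:] + degree (Ev v Q)" by simp
  thus False using c by simp
qed




lemma pick_inj: "i < card S \<Longrightarrow> j < card S \<Longrightarrow> pick S i = pick S j \<Longrightarrow> i = j"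
  by (metis nat_neq_iff pick_mono less_irrefl)

lemma sub_card: "R \<subseteq> {..<n} \<Longrightarrow> card {i. i < n \<and> i \<in> R} = card R"
  by (rule arg_cong[where f=card]) auto

lemma sub_carrier: "A \<in> carrier_mat n n \<Longrightarrow> R \<subseteq> {..<n} \<Longrightarrow> C \<subseteq> {..<n} \<Longrightarrow>
   submatrix A R C \<in> carrier_mat (card R) (card C)"
  unfolding carrier_mat_def by (auto simp: dim_submatrix sub_card)

lemma sub_index: "A \<in> carrier_mat n n \<Longrightarrow> R \<subseteq> {..<n} \<Longrightarrow> C \<subseteq> {..<n} \<Longrightarrow> i < card R \<Longrightarrow> j < card C \<Longrightarrow>
   submatrix A R C $$ (i,j) = A $$ (pick R i, pick C j)"
  by (rule submatrix_index) (auto simp: sub_card)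

lemma pick_lessThan: "i < n \<Longrightarrow> pick {..<n} i = i"
proof -
  assume "i < n"
  hence "pick {..<n} (card {a\<in>{..<n}. a < i}) = i" by (intro pick_card_in_set) auto
  moreover have "{a\<in>{..<n}. a < i} = {..<i}" using \<open>i < n\<close> by auto
  ultimately show ?thesis by simp
qed

lemma sub_full: "A \<in> carrier_mat n n \<Longrightarrow> submatrix A {..<n} {..<n} = A"
  by (rule eq_matI) (auto simp: sub_index pick_lessThan dim_submatrix sub_card)

lemma pick_range: "i < card S \<Longrightarrow> pick S i \<in> S" by (rule pick_in_set) simp

lemma pick_delete: assumes R: "finite R" and i: "i < card R" and l: "l < card R - 1"
  shows "pick (R - {pick R i}) l = pick R (if l < i then l else Suc l)"
proof -
  let ?l = "if l < i then l else Suc l"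
  let ?y = "pick R ?l"
  have lR: "?l < card R" using l i by auto
  have yR: "?y \<in> R" using lR by (rule pick_range)
  have yne: "?y \<noteq> pick R i" using pick_inj[OF lR i] by auto
  have "card {a \<in> R - {pick R i}. a < ?y} = l"
  proof (cases "l < i")
    case True
    hence lt: "?y < pick R i" using pick_mono[of i R ?l] i by auto
    have "{a \<in> R - {pick R i}. a < ?y} = {a \<in> R. a < ?y}" using lt by auto
    thus ?thesis using card_pick[of ?l R] lR True by simp
  next
    case False
    hence lt: "pick R i < ?y" using pick_mono[of ?l R i] lR by auto
    have eq: "{a \<in> R - {pick R i}. a < ?y} = {a \<in> R. a < ?y} - {pick R i}" by auto
    have "pick R i \<in> {a \<in> R. a < ?y}" using lt pick_range[OF i] by auto
    moreover have "finite {a \<in> R. a < ?y}" using R by auto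
    ultimately have "card ({a \<in> R. a < ?y} - {pick R i}) = card {a \<in> R. a < ?y} - 1" by simp
    thus ?thesis unfolding eq using card_pick[of ?l R] lR False by simp
  qed
  hence "pick (R - {pick R i}) (card {a \<in> R - {pick R i}. a < ?y}) = ?y"
    using yR yne by (intro pick_card_in_set) auto
  thus ?thesis using \<open>card {a \<in> R - {pick R i}. a < ?y} = l\<close> by simp
qed

lemma sub_delete:
  assumes A: "A \<in> carrier_mat n n" and R: "R \<subseteq> {..<n}" and C: "C \<subseteq> {..<n}"
    and i: "i < card R" and j: "j < card C"
  shows "mat_delete (submatrix A R C) i j = submatrix A (R - {pick R i}) (C - {pick C j})"
proof -
  have fR: "finite R" "finite C" using R C finite_subset by auto
  have cR: "card (R - {pick R i}) = card R - 1" using pick_range[OF i] fR by simp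
  have cC: "card (C - {pick C j}) = card C - 1" using pick_range[OF j] fR by simp
  have R': "R - {pick R i} \<subseteq> {..<n}" "C - {pick C j} \<subseteq> {..<n}" using R C by auto
  show ?thesis
  proof (rule eq_matI)
    show "dim_row (mat_delete (submatrix A R C) i j) = dim_row (submatrix A (R - {pick R i}) (C - {pick C j}))"
      using sub_carrier[OF A R C] sub_carrier[OF A R'] cR cC by simp
    show "dim_col (mat_delete (submatrix A R C) i j) = dim_col (submatrix A (R - {pick R i}) (C - {pick C j}))"
      using sub_carrier[OF A R C] sub_carrier[OF A R'] cR cC by simp
    fix a b assume ab: "a < dim_row (submatrix A (R - {pick R i}) (C - {pick C j}))"
      "b < dim_col (submatrix A (R - {pick R i}) (C - {pick C j}))"
    hence a: "a < card R - 1" and b: "b < card C - 1"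
      using sub_carrier[OF A R'] cR cC by auto
    have "mat_delete (submatrix A R C) i j $$ (a,b) = submatrix A R C $$ (if a < i then a else Suc a, if b < j then b else Suc b)"
      unfolding mat_delete_def using a b sub_carrier[OF A R C] by auto
    also have "\<dots> = A $$ (pick R (if a < i then a else Suc a), pick C (if b < j then b else Suc b))"
      using a b by (intro sub_index[OF A R C]) auto
    also have "\<dots> = submatrix A (R - {pick R i}) (C - {pick C j}) $$ (a,b)"
      using a b cR cC by (subst sub_index[OF A R']) (auto simp: pick_delete[OF fR(1) i] pick_delete[OF fR(2) j])
    finally show "mat_delete (submatrix A R C) i j $$ (a,b) = submatrix A (R - {pick R i}) (C - {pick C j}) $$ (a,b)" .
  qed
qed

lemma enum_perm:
  assumes R: "finite R" and N: "card R = N" and inj: "inj_on e {..<N}" and img: "e ` {..<N} \<subseteq> R"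
  shows "(\<lambda>i. if i < N then card {a\<in>R. a < e i} else i) permutes {0..<N}"
    and "\<And>i. i < N \<Longrightarrow> pick R ((\<lambda>i. if i < N then card {a\<in>R. a < e i} else i) i) = e i"
proof -
  define p where "p = (\<lambda>i. if i < N then card {a\<in>R. a < e i} else i)"
  have pick: "pick R (p i) = e i" if "i < N" for i
    unfolding p_def using that img by (auto intro!: pick_card_in_set)
  have lt: "p i < N" if "i < N" for i
  proof -
    have "{a\<in>R. a < e i} \<subset> R" using img that by auto
    hence "card {a\<in>R. a < e i} < card R" using R by (rule psubset_card_mono[rotated])
    thus ?thesis unfolding p_def using that N by simp
  qed
  have injp: "inj_on p {0..<N}"
  proof (rule inj_onI)
    fix i j assume "i \<in> {0..<N}" "j \<in> {0..<N}" "p i = p j"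
    hence "e i = e j" using pick by (metis atLeastLessThan_iff)
    thus "i = j" using inj \<open>i \<in> {0..<N}\<close> \<open>j \<in> {0..<N}\<close> by (auto dest: inj_onD)
  qed
  have "p ` {0..<N} = {0..<N}" by (rule endo_inj_surj) (use lt injp in auto)
  hence "bij_betw p {0..<N} {0..<N}" using injp by (simp add: bij_betw_def)
  thus "p permutes {0..<N}" by (rule bij_imp_permutes) (simp add: p_def)
  show "\<And>i. i < N \<Longrightarrow> pick R (p i) = e i" by (rule pick)
qed

lemma det_perm_both:
  assumes B: "B \<in> carrier_mat N N" and p: "p permutes {0..<N}" and q: "q permutes {0..<N}"
  shows "det (mat N N (\<lambda>(i,j). B $$ (p i, q j))) = of_int (sign p) * of_int (sign q) * det B"
proof -
  have pl: "p i < N" if "i < N" for i using permutes_in_image[OF p] that by auto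
  have ql: "q i < N" if "i < N" for i using permutes_in_image[OF q] that by auto
  define Bc where "Bc = mat N N (\<lambda>(i,j). B $$ (i, q j))"
  have Bc: "Bc \<in> carrier_mat N N" unfolding Bc_def by simp
  have "mat N N (\<lambda>(i,j). B $$ (p i, q j)) = mat N N (\<lambda>(i,j). Bc $$ (p i, j))"
    by (rule eq_matI) (auto simp: Bc_def pl)
  hence "det (mat N N (\<lambda>(i,j). B $$ (p i, q j))) = of_int (sign p) * det Bc"
    using det_permute_rows[OF Bc p] by simp
  moreover have "transpose_mat Bc = mat N N (\<lambda>(i,j). transpose_mat B $$ (q i, j))"
    by (rule eq_matI) (use B in \<open>auto simp: Bc_def ql\<close>)
  hence "det (transpose_mat Bc) = of_int (sign q) * det (transpose_mat B)"
    using det_permute_rows[OF iffD2[OF transpose_carrier_mat B] q] by simp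
  hence "det Bc = of_int (sign q) * det B"
    using det_transpose[OF Bc] det_transpose[OF B] by simp
  ultimately show ?thesis by simp
qed




lemma enum_two:
  assumes R: "finite R" and I: "I \<subseteq> R" and N: "card R = N" and r: "card I = r"
  shows "inj_on (\<lambda>i. if i < r then pick I i else pick (R - I) (i - r)) {..<N}"
    and "(\<lambda>i. if i < r then pick I i else pick (R - I) (i - r)) ` {..<N} \<subseteq> R"
proof -
  have fI: "finite I" using R I finite_subset by auto
  have cRI: "card (R - I) = N - r" using card_Diff_subset[OF fI I] N r by simp
  have rN: "r \<le> N" using card_mono[OF R I] N r by simp
  show "inj_on (\<lambda>i. if i < r then pick I i else pick (R - I) (i - r)) {..<N}"
  proof (rule inj_onI)
    fix i j assume i: "i \<in> {..<N}" and j: "j \<in> {..<N}"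
      and eq: "(if i < r then pick I i else pick (R - I) (i - r)) = (if j < r then pick I j else pick (R - I) (j - r))"
    show "i = j"
    proof (cases "i < r"; cases "j < r")
      assume "i < r" "j < r" thus ?thesis using eq pick_inj[of i I j] r by auto
    next
      assume a: "\<not> i < r" "\<not> j < r"
      hence "i - r = j - r" using eq pick_inj[of "i - r" "R - I" "j - r"] cRI i j by auto
      thus ?thesis using a by auto
    next
      assume a: "i < r" "\<not> j < r"
      have "pick I i \<in> I" using r a by (intro pick_range) simp
      moreover have "pick (R - I) (j - r) \<in> R - I" using cRI j a by (intro pick_range) simp
      ultimately show ?thesis using eq a by auto
    next
      assume a: "\<not> i < r" "j < r"
      have "pick I j \<in> I" using r a by (intro pick_range) simp
      moreover have "pick (R - I) (i - r) \<in> R - I" using cRI i a by (intro pick_range) simp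
      ultimately show ?thesis using eq a by auto
    qed
  qed
  show "(\<lambda>i. if i < r then pick I i else pick (R - I) (i - r)) ` {..<N} \<subseteq> R"
  proof
    fix y assume "y \<in> (\<lambda>i. if i < r then pick I i else pick (R - I) (i - r)) ` {..<N}"
    then obtain i where i: "i < N" and y: "y = (if i < r then pick I i else pick (R - I) (i - r))" by auto
    show "y \<in> R"
    proof (cases "i < r")
      case True thus ?thesis using y r I pick_range[of i I] by auto
    next
      case False thus ?thesis using y cRI i pick_range[of "i - r" "R - I"] by auto
    qed
  qed
qed

lemma block_factor:
  fixes A :: "'a::idom mat"
  assumes A: "A \<in> carrier_mat n n" and R: "R \<subseteq> {..<n}" and C: "C \<subseteq> {..<n}" and RC: "card R = card C"
    and I: "I \<subseteq> R" and K: "K \<subseteq> C" and IK: "card I = card K"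
    and zero: "\<And>i j. i \<in> I \<Longrightarrow> j \<in> C - K \<Longrightarrow> A $$ (i,j) = 0"
  shows "\<exists>s. s * s = 1 \<and> det (submatrix A R C) = s * (det (submatrix A I K) * det (submatrix A (R-I) (C-K)))"
proof -
  define N where "N = card R"
  define r where "r = card I"
  have fR: "finite R" "finite C" using R C finite_subset by auto
  have fI: "finite I" "finite K" using fR I K finite_subset by auto
  have cRI: "card (R - I) = N - r" using card_Diff_subset[OF fI(1) I] N_def r_def by simp
  have cCK: "card (C - K) = N - r" using card_Diff_subset[OF fI(2) K] N_def r_def RC IK by simp
  have rN: "r \<le> N" using card_mono[OF fR(1) I] N_def r_def by simp
  have I': "I \<subseteq> {..<n}" "K \<subseteq> {..<n}" "R - I \<subseteq> {..<n}" "C - K \<subseteq> {..<n}" using I K R C by auto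
  define eR where "eR = (\<lambda>i. if i < r then pick I i else pick (R - I) (i - r))"
  define eC where "eC = (\<lambda>i. if i < r then pick K i else pick (C - K) (i - r))"
  note eR = enum_two[OF fR(1) I N_def[symmetric] r_def[symmetric], folded eR_def]
  note eC = enum_two[OF fR(2) K RC[symmetric, folded N_def] IK[symmetric, folded r_def], folded eC_def]
  note p = enum_perm[OF fR(1) N_def[symmetric] eR]
  note q = enum_perm[OF fR(2) RC[symmetric, folded N_def] eC]
  define p' where "p' = (\<lambda>i. if i < N then card {a\<in>R. a < eR i} else i)"
  define q' where "q' = (\<lambda>i. if i < N then card {a\<in>C. a < eC i} else i)"
  have pp: "p' permutes {0..<N}" "\<And>i. i < N \<Longrightarrow> pick R (p' i) = eR i" using p unfolding p'_def by auto
  have qq: "q' permutes {0..<N}" "\<And>i. i < N \<Longrightarrow> pick C (q' i) = eC i" using q unfolding q'_def by auto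
  have pl: "p' i < N" if "i < N" for i using permutes_in_image[OF pp(1)] that by auto
  have ql: "q' i < N" if "i < N" for i using permutes_in_image[OF qq(1)] that by auto
  define B where "B = submatrix A R C"
  have B: "B \<in> carrier_mat N N" unfolding B_def N_def using sub_carrier[OF A R C] RC by simp
  define B' where "B' = mat N N (\<lambda>(i,j). B $$ (p' i, q' j))"
  have B'idx: "B' $$ (i,j) = A $$ (eR i, eC j)" if "i < N" "j < N" for i j
    unfolding B'_def B_def using that pl ql RC N_def
    by (simp add: sub_index[OF A R C] pp qq)
  define A11 where "A11 = submatrix A I K"
  define A22 where "A22 = submatrix A (R - I) (C - K)"
  define A21 where "A21 = mat (N - r) r (\<lambda>(i,j). A $$ (eR (i + r), eC j))"
  have A11: "A11 \<in> carrier_mat r r" unfolding A11_def r_def using sub_carrier[OF A I'(1,2)] IK by simp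
  have A22: "A22 \<in> carrier_mat (N - r) (N - r)" unfolding A22_def using sub_carrier[OF A I'(3,4)] cRI cCK by simp
  have blk: "B' = four_block_mat A11 (0\<^sub>m r (N - r)) A21 A22"
  proof (rule eq_matI)
    show "dim_row B' = dim_row (four_block_mat A11 (0\<^sub>m r (N - r)) A21 A22)"
      using A11 A22 rN by (simp add: B'_def)
    show "dim_col B' = dim_col (four_block_mat A11 (0\<^sub>m r (N - r)) A21 A22)"
      using A11 A22 rN by (simp add: B'_def)
    fix i j assume "i < dim_row (four_block_mat A11 (0\<^sub>m r (N - r)) A21 A22)"
      "j < dim_col (four_block_mat A11 (0\<^sub>m r (N - r)) A21 A22)"
    hence i: "i < N" and j: "j < N" using A11 A22 rN by auto
    show "B' $$ (i,j) = four_block_mat A11 (0\<^sub>m r (N - r)) A21 A22 $$ (i,j)"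
    proof -
      have "four_block_mat A11 (0\<^sub>m r (N - r)) A21 A22 $$ (i,j) =
        (if i < r then if j < r then A11 $$ (i, j) else 0\<^sub>m r (N - r) $$ (i, j - r)
         else if j < r then A21 $$ (i - r, j) else A22 $$ (i - r, j - r))"
        using A11 A22 i j rN by (subst index_mat_four_block) auto
      also have "\<dots> = A $$ (eR i, eC j)"
      proof (cases "i < r"; cases "j < r")
        assume a: "i < r" "j < r"
        thus ?thesis unfolding A11_def eR_def eC_def using IK r_def by (simp add: sub_index[OF A I'(1,2)])
      next
        assume a: "i < r" "\<not> j < r"
        have "pick I i \<in> I" using a r_def by (intro pick_range) simp
        moreover have "pick (C - K) (j - r) \<in> C - K" using a cCK j by (intro pick_range) simp
        ultimately show ?thesis using a zero j rN unfolding eR_def eC_def by auto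
      next
        assume a: "\<not> i < r" "j < r"
        thus ?thesis unfolding A21_def using i rN by auto
      next
        assume a: "\<not> i < r" "\<not> j < r"
        thus ?thesis unfolding A22_def eR_def eC_def using i j cRI cCK by (simp add: sub_index[OF A I'(3,4)])
      qed
      finally show ?thesis using B'idx i j by simp
    qed
  qed
  have "det B' = det A11 * det A22"
    unfolding blk by (rule det_four_block_mat_upper_right_zero[OF A11 refl _ A22]) (simp add: A21_def)
  moreover have "det B' = of_int (sign p') * of_int (sign q') * det B"
    unfolding B'_def by (rule det_perm_both[OF B pp(1) qq(1)])
  moreover define s where "s = (of_int (sign p') * of_int (sign q') :: 'a)"
  moreover have "(of_int (sign p') :: 'a) \<in> {1,-1}" "(of_int (sign q') :: 'a) \<in> {1,-1}" by (rule signof_pm_one)+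
  hence "s * s = 1" unfolding s_def by auto
  ultimately have "det B = s * (det A11 * det A22)"
    by (metis (no_types, lifting) mult.assoc mult_1)
  thus ?thesis using \<open>s * s = 1\<close> unfolding B_def A11_def A22_def by blast
qed




definition glike :: "nat \<Rightarrow> ('v,'a::comm_ring_1) mpoly mat \<Rightarrow> bool" where
  "glike n A \<longleftrightarrow> A \<in> carrier_mat n n \<and> (\<forall>i j. i < n \<longrightarrow> j < n \<longrightarrow> A $$ (i,j) = 0 \<or>
     (\<exists>w. A $$ (i,j) = mvar w \<and> (\<forall>i' j'. i' < n \<longrightarrow> j' < n \<longrightarrow> A $$ (i',j') = mvar w \<longrightarrow> i' = i \<and> j' = j)))"

lemma mvar_inj: "(mvar a :: ('v,'a::comm_ring_1) mpoly) = mvar b \<Longrightarrow> a = b"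
proof -
  assume h: "(mvar a :: ('v,'a::comm_ring_1) mpoly) = mvar b"
  have "Poly_Mapping.lookup (mvar a :: ('v,'a) mpoly) (Poly_Mapping.single a 1) = 1" by (simp add: mvar_def)
  hence "Poly_Mapping.lookup (mvar b :: ('v,'a) mpoly) (Poly_Mapping.single a 1) = 1" using h by simp
  hence "Poly_Mapping.single b (1::nat) = Poly_Mapping.single a 1"
    by (simp add: mvar_def lookup_single when_def split: if_splits)
  hence "Poly_Mapping.lookup (Poly_Mapping.single b (1::nat)) a = 1" by simp
  thus "a = b" by (simp add: lookup_single when_def split: if_splits)
qed

lemma mvar_nz: "(mvar a :: ('v,'a::comm_ring_1) mpoly) \<noteq> 0"
proof
  assume "(mvar a :: ('v,'a::comm_ring_1) mpoly) = 0"
  hence "Poly_Mapping.lookup (mvar a :: ('v,'a) mpoly) (Poly_Mapping.single a 1) = 0" by simp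
  thus False by (simp add: mvar_def)
qed

lemma glike_avoids:
  assumes g: "glike n A" and ij: "i < n" "j < n" and kl: "k < n" "l < n" and ne: "(i,j) \<noteq> (k,l)"
    and v: "A $$ (k,l) = mvar v"
  shows "avoids v (A $$ (i,j))"
proof -
  from g ij consider "A $$ (i,j) = 0" | w where "A $$ (i,j) = mvar w"
      "\<forall>i' j'. i' < n \<longrightarrow> j' < n \<longrightarrow> A $$ (i',j') = mvar w \<longrightarrow> i' = i \<and> j' = j"
    unfolding glike_def by blast
  thus ?thesis
  proof cases
    case 1 thus ?thesis by (simp add: avoids_def)
  next
    case 2
    have "w \<noteq> v" using 2 v kl ne by auto
    thus ?thesis using 2 by (auto simp: avoids_def)
  qed
qed

lemma FK:
  fixes A :: "('v::linorder,'a::idom) mpoly mat"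
  assumes g: "glike n A"
  shows "R \<subseteq> {..<n} \<Longrightarrow> C \<subseteq> {..<n} \<Longrightarrow> card R = card C \<Longrightarrow> det (submatrix A R C) = 0 \<Longrightarrow>
    \<exists>I J. I \<subseteq> R \<and> J \<subseteq> C \<and> card I + card J = card R + 1 \<and> (\<forall>i\<in>I. \<forall>j\<in>J. A $$ (i,j) = 0)"
proof (induction "card R" arbitrary: R C rule: less_induct)
  case less
  note R = less.prems(1) and C = less.prems(2) and RC = less.prems(3) and d0 = less.prems(4)
  have A: "A \<in> carrier_mat n n" using g by (simp add: glike_def)
  define N where "N = card R"
  have fR: "finite R" "finite C" using R C finite_subset by auto
  have B: "submatrix A R C \<in> carrier_mat N N" using sub_carrier[OF A R C] RC N_def by simp
  show ?case
  proof (cases "N = 0")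
    case True
    hence "det (submatrix A R C) = 1" using B by simp
    thus ?thesis using d0 by simp
  next
    case False
    hence N0: "0 < N" by simp
    define r0 where "r0 = pick R 0"
    have r0R: "r0 \<in> R" unfolding r0_def using N0 N_def by (intro pick_range) simp
    show ?thesis
    proof (cases "\<forall>j\<in>C. A $$ (r0, j) = 0")
      case True
      thus ?thesis using r0R RC N_def fR by (intro exI[of _ "{r0}"] exI[of _ C]) auto
    next
      case False
      then obtain c0 where c0C: "c0 \<in> C" and nz: "A $$ (r0, c0) \<noteq> 0" by auto
      have r0n: "r0 < n" and c0n: "c0 < n" using r0R c0C R C by auto
      from g r0n c0n nz obtain v where v: "A $$ (r0, c0) = mvar v" unfolding glike_def by blast
      define j0 where "j0 = card {a\<in>C. a < c0}"
      have pc0: "pick C j0 = c0" unfolding j0_def by (rule pick_card_in_set[OF c0C])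
      have "{a\<in>C. a < c0} \<subset> C" using c0C by auto
      hence j0N: "j0 < N" unfolding j0_def N_def RC using fR by (simp add: psubset_card_mono)
      have T: "\<exists>b. Ev v (det (submatrix A R C)) = [:b, cofactor (submatrix A R C) 0 j0:]"
      proof (rule T2[OF B N0 j0N])
        show "submatrix A R C $$ (0, j0) = mvar v"
          using sub_index[OF A R C, of 0 j0] N0 j0N N_def RC pc0 v r0_def by simp
        fix i j assume i: "i < N" and j: "j < N" and ne: "(i,j) \<noteq> (0,j0)"
        have "(pick R i, pick C j) \<noteq> (r0, c0)"
          using ne pick_inj[of i R 0] pick_inj[of j C j0] i j j0N N0 N_def RC pc0 r0_def by auto
        moreover have "pick R i < n" "pick C j < n" using pick_range[of i R] pick_range[of j C] i j N_def RC R C by auto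
        ultimately have "avoids v (A $$ (pick R i, pick C j))"
          using glike_avoids[OF g _ _ r0n c0n _ v] by blast
        thus "avoids v (submatrix A R C $$ (i,j))"
          using sub_index[OF A R C, of i j] i j N_def RC by simp
      qed
      have "cofactor (submatrix A R C) 0 j0 = 0" using T2a[OF T d0] .
      hence "det (mat_delete (submatrix A R C) 0 j0) = 0" unfolding cofactor_def by simp
      hence d1: "det (submatrix A (R - {r0}) (C - {c0})) = 0"
        using sub_delete[OF A R C, of 0 j0] N0 N_def j0N RC pc0 r0_def by simp
      have cR': "card (R - {r0}) = N - 1" using r0R fR N_def by simp
      have cC': "card (C - {c0}) = N - 1" using c0C fR N_def RC by simp
      have "\<exists>I J. I \<subseteq> R - {r0} \<and> J \<subseteq> C - {c0} \<and> card I + card J = card (R - {r0}) + 1 \<and> (\<forall>i\<in>I. \<forall>j\<in>J. A $$ (i,j) = 0)"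
        by (rule less.hyps) (use cR' cC' N0 N_def R C d1 in auto)
      then obtain I' J' where I': "I' \<subseteq> R - {r0}" and J': "J' \<subseteq> C - {c0}" and IJ: "card I' + card J' = N - 1 + 1"
        and z: "\<forall>i\<in>I'. \<forall>j\<in>J'. A $$ (i,j) = 0"
        using cR' by auto
      have fI': "finite I'" "finite J'" using I' J' fR finite_subset by blast+
      have cI'le: "card I' \<le> N - 1" using card_mono[OF _ I'] cR' fR by simp
      have cJ'le: "card J' \<le> N - 1" using card_mono[OF _ J'] cC' fR by simp
      define K where "K = C - J'"
      have JC: "J' \<subseteq> C" using J' by auto
      have cK: "card K = card I'" unfolding K_def using card_Diff_subset[OF fI'(2) JC] IJ RC N_def N0 by simp
      have CK: "C - K = J'" unfolding K_def using JC by auto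
      have IR: "I' \<subseteq> R" using I' by auto
      obtain s where s: "s * s = 1" and
        dB: "det (submatrix A R C) = s * (det (submatrix A I' K) * det (submatrix A (R - I') (C - K)))"
        using block_factor[OF A R C RC IR _ cK[symmetric]] z CK unfolding K_def by auto
      have "s \<noteq> 0" using s by auto
      hence "det (submatrix A I' K) = 0 \<or> det (submatrix A (R - I') J') = 0" using dB d0 CK by simp
      thus ?thesis
      proof
        assume dA: "det (submatrix A I' K) = 0"
        have "\<exists>I J. I \<subseteq> I' \<and> J \<subseteq> K \<and> card I + card J = card I' + 1 \<and> (\<forall>i\<in>I. \<forall>j\<in>J. A $$ (i,j) = 0)"
          by (rule less.hyps) (use cI'le N0 N_def IR R C cK dA in \<open>auto simp: K_def\<close>)
        then obtain I'' J'' where I'': "I'' \<subseteq> I'" and J'': "J'' \<subseteq> K" and IJ'': "card I'' + card J'' = card I' + 1"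
          and z'': "\<forall>i\<in>I''. \<forall>j\<in>J''. A $$ (i,j) = 0" by blast
        have disj: "J'' \<inter> J' = {}" using J'' unfolding K_def by auto
        have fJ'': "finite J''" using J'' fR unfolding K_def by (auto intro: finite_subset)
        have "card (J'' \<union> J') = card J'' + card J'" using card_Un_disjoint[OF fJ'' fI'(2) disj] .
        moreover have "J'' \<union> J' \<subseteq> C" using J'' JC unfolding K_def by auto
        ultimately show ?thesis using I'' IR z z'' IJ IJ'' N_def N0
          by (intro exI[of _ I''] exI[of _ "J'' \<union> J'"]) auto
      next
        assume dA: "det (submatrix A (R - I') J') = 0"
        have cRI: "card (R - I') = card J'" using card_Diff_subset[OF fI'(1) IR] IJ N_def N0 by simp
        have "card I' \<ge> 1" using IJ cJ'le N0 by simp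
        hence lt: "card (R - I') < card R" using cRI IJ N_def N0 by simp
        have "\<exists>I J. I \<subseteq> R - I' \<and> J \<subseteq> J' \<and> card I + card J = card (R - I') + 1 \<and> (\<forall>i\<in>I. \<forall>j\<in>J. A $$ (i,j) = 0)"
          by (rule less.hyps[OF lt]) (use R C JC cRI dA in auto)
        then obtain I'' J'' where I'': "I'' \<subseteq> R - I'" and J'': "J'' \<subseteq> J'" and IJ'': "card I'' + card J'' = card (R - I') + 1"
          and z'': "\<forall>i\<in>I''. \<forall>j\<in>J''. A $$ (i,j) = 0" by blast
        have disj: "I'' \<inter> I' = {}" using I'' by auto
        have fI'': "finite I''" using I'' fR by (auto intro: finite_subset)
        have "card (I'' \<union> I') = card I'' + card I'" using card_Un_disjoint[OF fI'' fI'(1) disj] .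
        moreover have "I'' \<union> I' \<subseteq> R" using I'' IR by auto
        ultimately show ?thesis using J'' JC z z'' IJ IJ'' cRI N_def N0
          by (intro exI[of _ "I'' \<union> I'"] exI[of _ J'']) auto
      qed
    qed
  qed
qed




lemma keys_uminus_pm: "Poly_Mapping.keys (- p) = Poly_Mapping.keys (p :: ('b \<Rightarrow>\<^sub>0 'a::ab_group_add))"
  by (auto simp: in_keys_iff)

lemma keys_add_nat: "Poly_Mapping.keys (a + b) \<subseteq> Poly_Mapping.keys a \<union> Poly_Mapping.keys (b :: 'v \<Rightarrow>\<^sub>0 nat)"
  by (rule keys_add)

lemma vars_add: "mpoly_vars (p + q) \<subseteq> mpoly_vars p \<union> mpoly_vars q"
  unfolding mpoly_vars_def using keys_add[of p q] by auto

lemma vars_mult: "mpoly_vars (p * q) \<subseteq> mpoly_vars p \<union> mpoly_vars (q :: ('v,'a::comm_semiring_1) mpoly)"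
proof
  fix v assume "v \<in> mpoly_vars (p * q)"
  then obtain mn where mn: "mn \<in> Poly_Mapping.keys (p * q)" and v: "v \<in> Poly_Mapping.keys mn"
    unfolding mpoly_vars_def by auto
  from mn keys_mult obtain a b where "mn = a + b" "a \<in> Poly_Mapping.keys p" "b \<in> Poly_Mapping.keys q" by blast
  thus "v \<in> mpoly_vars p \<union> mpoly_vars q" using v keys_add[of a b] unfolding mpoly_vars_def by auto
qed

lemma vars_uminus: "mpoly_vars (- p) = mpoly_vars (p :: ('v,'a::comm_ring_1) mpoly)"
  unfolding mpoly_vars_def by (simp add: keys_uminus_pm)

lemma vars_zero[simp]: "mpoly_vars 0 = {}" by (simp add: mpoly_vars_def)
lemma vars_one[simp]: "mpoly_vars (1 :: ('v,'a::comm_semiring_1) mpoly) = {}" by (simp add: mpoly_vars_def)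
lemma vars_mvar: "mpoly_vars (mvar w :: ('v,'a::comm_semiring_1) mpoly) = {w}" by (simp add: mpoly_vars_def mvar_def)

lemma vars_sum: "(\<And>a. a \<in> A \<Longrightarrow> mpoly_vars (f a) \<subseteq> S) \<Longrightarrow> mpoly_vars (sum f A) \<subseteq> S"
  by (induct A rule: infinite_finite_induct) (auto dest: subsetD[OF vars_add])

lemma vars_prod: "(\<And>a. a \<in> A \<Longrightarrow> mpoly_vars (f a) \<subseteq> S) \<Longrightarrow> mpoly_vars (prod f A :: ('v,'a::comm_semiring_1) mpoly) \<subseteq> S"
  by (induct A rule: infinite_finite_induct) (auto dest: subsetD[OF vars_mult])

lemma vars_neg_one_pow: "mpoly_vars ((-1) ^ k :: ('v,'a::comm_ring_1) mpoly) = {}"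
  by (induct k) (use vars_mult[of "-1 :: ('v,'a) mpoly"] in \<open>auto simp: vars_uminus\<close>)

lemma vars_sign: "mpoly_vars (of_int (sign p) :: ('v,'a::comm_ring_1) mpoly) = {}"
proof -
  have "(of_int (sign p) :: ('v,'a) mpoly) \<in> {1,-1}" by (simp add: sign_def)
  thus ?thesis by (auto simp: vars_uminus)
qed

lemma vars_det: assumes "\<And>i j. i < dim_row M \<Longrightarrow> j < dim_col M \<Longrightarrow> mpoly_vars (M $$ (i,j)) \<subseteq> S"
  shows "mpoly_vars (det M :: ('v,'a::comm_ring_1) mpoly) \<subseteq> S"
proof (cases "dim_row M = dim_col M")
  case sq: True
  show ?thesis unfolding det_def using sq
  proof (simp, intro vars_sum)
    fix a assume a: "a \<in> {p. p permutes {0..<dim_col M}}"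
    have "mpoly_vars (\<Prod>i = 0..<dim_col M. M $$ (i, a i)) \<subseteq> S"
    proof (rule vars_prod)
      fix i assume "i \<in> {0..<dim_col M}"
      thus "mpoly_vars (M $$ (i, a i)) \<subseteq> S" using a permutes_in_image[of a "{0..<dim_col M}" i] assms sq by auto
    qed
    thus "mpoly_vars (of_int (sign a) * (\<Prod>i = 0..<dim_col M. M $$ (i, a i))) \<subseteq> S"
      using vars_mult[of "of_int (sign a)" "\<Prod>i = 0..<dim_col M. M $$ (i, a i)"] vars_sign[of a] by auto
  qed
next
  case False thus ?thesis unfolding det_def by simp
qed




context
  fixes m :: nat and S :: "(nat \<times> nat) set"
begin

abbreviation GM :: "(nat \<times> nat, 'a::field) mpoly mat" where "GM \<equiv> generic_matrix m S"

lemma GM_carrier: "GM \<in> carrier_mat m m" by (simp add: generic_matrix_def)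

lemma GM_index: "i < m \<Longrightarrow> j < m \<Longrightarrow> GM $$ (i,j) = (if (i,j) \<in> S then mvar (i,j) else 0)"
  by (simp add: generic_matrix_def)

lemma GM_glike: "glike m GM"
  unfolding glike_def using GM_carrier
  by (auto simp: GM_index dest: mvar_inj mvar_nz[THEN notE] split: if_splits)

lemma mpoly_eval_mvar: "mpoly_eval (x :: 'v \<Rightarrow> 'b::comm_ring_1) (mvar w) = x w"
  unfolding mpoly_eval_heval by (rule comm_ring_hom.heval_mvar[OF id_hom])

lemma eval0_entry: "i < m \<Longrightarrow> j < m \<Longrightarrow> mpoly_eval (\<lambda>_. 0::'a::field) (GM $$ (i,j)) = 0"
proof -
  interpret E: comm_ring_hom "mpoly_eval (\<lambda>_. 0::'a)" by (rule mpoly_eval_hom)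
  show "i < m \<Longrightarrow> j < m \<Longrightarrow> mpoly_eval (\<lambda>_. 0) (GM $$ (i,j)) = (0::'a)"
    by (simp add: GM_index mpoly_eval_mvar)
qed

lemma eval0_sub_entry:
  assumes I: "I \<subseteq> {..<m}" "K \<subseteq> {..<m}" and ij: "i < card I" "j < card K"
  shows "mpoly_eval (\<lambda>_. 0::'a::field) (submatrix (GM :: (nat \<times> nat, 'a) mpoly mat) I K $$ (i,j)) = 0"
proof -
  have "pick I i \<in> I" using ij(1) by (rule pick_range)
  moreover have "pick K j \<in> K" using ij(2) by (rule pick_range)
  ultimately have pm: "pick I i < m" "pick K j < m" using I by auto
  have "submatrix (GM :: (nat \<times> nat, 'a) mpoly mat) I K $$ (i,j) = GM $$ (pick I i, pick K j)"
    by (rule sub_index[OF GM_carrier I ij])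
  thus ?thesis using eval0_entry[OF pm] by simp
qed

lemma eval0_sub_det:
  assumes I: "I \<subseteq> {..<m}" "K \<subseteq> {..<m}" "card I = card K" "card I \<ge> 1"
  shows "mpoly_eval (\<lambda>_. 0::'a::field) (det (submatrix GM I K)) = 0"
proof -
  interpret E: comm_ring_hom "mpoly_eval (\<lambda>_. 0::'a)" by (rule mpoly_eval_hom)
  define B where "B = submatrix (GM :: (nat \<times> nat, 'a) mpoly mat) I K"
  have c: "B \<in> carrier_mat (card I) (card I)" unfolding B_def using sub_carrier[OF GM_carrier I(1,2)] I(3) by simp
  have "map_mat (mpoly_eval (\<lambda>_. 0)) B = 0\<^sub>m (card I) (card I)"
    by (rule eq_matI) (use c eval0_sub_entry[OF I(1,2)] I(3) in \<open>auto simp: B_def\<close>)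
  hence "det (map_mat (mpoly_eval (\<lambda>_. 0)) B) = (0::'a)" using I by (simp del: E.hom_det)
  thus ?thesis unfolding B_def by (simp only: E.hom_det)
qed

lemma core:
  assumes m: "m \<ge> 2" and irr: "irreducible (det (GM :: (nat \<times> nat, 'a::field) mpoly mat))" and k: "k < m"
  shows "cofactor (GM :: (nat \<times> nat, 'a) mpoly mat) 0 k \<noteq> 0"
proof
  assume "cofactor (GM :: (nat \<times> nat, 'a) mpoly mat) 0 k = 0"
  hence "det (mat_delete (GM :: (nat \<times> nat, 'a) mpoly mat) 0 k) = 0" unfolding cofactor_def by simp
  moreover have "mat_delete (GM :: (nat \<times> nat, 'a) mpoly mat) 0 k = submatrix GM ({..<m} - {0}) ({..<m} - {k})"
  proof -
    have "mat_delete (submatrix (GM :: (nat \<times> nat, 'a) mpoly mat) {..<m} {..<m}) 0 k = submatrix GM ({..<m} - {pick {..<m} 0}) ({..<m} - {pick {..<m} k})"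
      by (rule sub_delete[OF GM_carrier]) (use k m in auto)
    thus ?thesis using k m by (simp add: pick_lessThan sub_full[OF GM_carrier])
  qed
  ultimately have d: "det (submatrix (GM :: (nat \<times> nat, 'a) mpoly mat) ({..<m} - {0}) ({..<m} - {k})) = 0" by simp
  have "\<exists>I J. I \<subseteq> {..<m} - {0} \<and> J \<subseteq> {..<m} - {k} \<and> card I + card J = card ({..<m} - {0::nat}) + 1 \<and> (\<forall>i\<in>I. \<forall>j\<in>J. (GM :: (nat \<times> nat, 'a) mpoly mat) $$ (i,j) = 0)"
    by (rule FK[OF GM_glike]) (use d k m in auto)
  then obtain I J where I: "I \<subseteq> {..<m} - {0}" and J: "J \<subseteq> {..<m} - {k}" and IJ: "card I + card J = card ({..<m} - {0::nat}) + 1"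
    and z: "\<forall>i\<in>I. \<forall>j\<in>J. (GM :: (nat \<times> nat, 'a) mpoly mat) $$ (i,j) = 0" by blast
  have cU: "card ({..<m} - {0::nat}) = m - 1" using m by simp
  have fJ: "finite J" "finite I" using finite_subset[OF J] finite_subset[OF I] by auto
  have cJ: "card J \<le> m - 1" using card_mono[OF _ J] k by simp
  have cI: "card I \<le> m - 1" using card_mono[OF _ I] cU by simp
  define K where "K = {..<m} - J"
  have JU: "J \<subseteq> {..<m}" using J by auto
  have cK: "card K = card I" unfolding K_def using card_Diff_subset[OF fJ(1) JU] IJ cU m by simp
  have UK: "{..<m} - K = J" unfolding K_def using JU by auto
  have IU: "I \<subseteq> {..<m}" using I by auto
  have KU: "K \<subseteq> {..<m}" unfolding K_def by auto
  have zero: "\<And>i j. i \<in> I \<Longrightarrow> j \<in> {..<m} - K \<Longrightarrow> (GM :: (nat \<times> nat, 'a) mpoly mat) $$ (i,j) = 0"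
    using z UK by blast
  obtain s where s: "s * s = 1" and
    dG: "det (submatrix (GM :: (nat \<times> nat, 'a) mpoly mat) {..<m} {..<m}) = s * (det (submatrix GM I K) * det (submatrix GM ({..<m} - I) ({..<m} - K)))"
    using block_factor[OF GM_carrier subset_refl subset_refl refl IU KU cK[symmetric] zero] by blast
  have dG': "det (GM :: (nat \<times> nat, 'a) mpoly mat) = (s * det (submatrix GM I K)) * det (submatrix GM ({..<m} - I) J)"
  proof -
    have sf: "submatrix (GM :: (nat \<times> nat, 'a) mpoly mat) {..<m} {..<m} = GM" by (rule sub_full[OF GM_carrier])
    have "det (GM :: (nat \<times> nat, 'a) mpoly mat) = det (submatrix (GM :: (nat \<times> nat, 'a) mpoly mat) {..<m} {..<m})"
      unfolding sf ..
    thus ?thesis using dG UK by (simp only: mult.assoc)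
  qed
  interpret E: comm_ring_hom "mpoly_eval (\<lambda>_. 0::'a)" by (rule mpoly_eval_hom)
  have cI1: "card I \<ge> 1" using IJ cJ cU m by linarith
  have cJ1: "card J \<ge> 1" using IJ cI cU m by linarith
  have e0: "mpoly_eval (\<lambda>_. 0::'a) (det (submatrix (GM :: (nat \<times> nat, 'a) mpoly mat) I K)) = 0"
    by (rule eval0_sub_det[OF IU KU cK[symmetric] cI1])
  have e1: "mpoly_eval (\<lambda>_. 0) (s * det (submatrix (GM :: (nat \<times> nat, 'a) mpoly mat) I K)) = 0"
    unfolding E.hom_mult e0 by simp
  have cRI: "card ({..<m} - I) = card J" using card_Diff_subset[OF fJ(2) IU] IJ cU m by simp
  have MI: "{..<m} - I \<subseteq> {..<m}" by auto
  have e2: "mpoly_eval (\<lambda>_. 0::'a) (det (submatrix (GM :: (nat \<times> nat, 'a) mpoly mat) ({..<m} - I) J)) = 0"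
    by (rule eval0_sub_det[OF MI JU cRI]) (use cRI cJ1 in simp)
  from irr dG' have "s * det (submatrix (GM :: (nat \<times> nat, 'a) mpoly mat) I K) dvd 1 \<or>
     det (submatrix (GM :: (nat \<times> nat, 'a) mpoly mat) ({..<m} - I) J) dvd 1"
    unfolding irreducible_def by blast
  thus False
  proof
    assume "s * det (submatrix (GM :: (nat \<times> nat, 'a) mpoly mat) I K) dvd 1"
    from E.hom_dvd_1[OF this] e1 show False by simp
  next
    assume "det (submatrix (GM :: (nat \<times> nat, 'a) mpoly mat) ({..<m} - I) J) dvd 1"
    from E.hom_dvd_1[OF this] e2 show False by simp
  qed
qed

end




lemma mat_delete_entry:
  assumes "i < dim_row (mat_delete A a b)" "j < dim_col (mat_delete A a b)"
  shows "\<exists>i' j'. i' < dim_row A \<and> j' < dim_col A \<and> i' \<noteq> a \<and> mat_delete A a b $$ (i,j) = A $$ (i',j')"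
  using assms unfolding mat_delete_def
  by (intro exI[of _ "if i < a then i else Suc i"] exI[of _ "if j < b then j else Suc j"]) auto

lemma map_mat_delete: "map_mat f (mat_delete A a b) = mat_delete (map_mat f A) a b"
  by (rule eq_matI) (auto simp: mat_delete_def)

theorem main_gen:
  fixes m :: nat and S :: "(nat \<times> nat) set"
  assumes m: "m \<ge> 2" and S: "S \<subseteq> {..<m} \<times> {..<m}"
    and irr: "irreducible (det (generic_matrix m S :: (nat \<times> nat, 'a::field) mpoly mat))"
  shows "\<exists>P :: (nat \<times> nat, 'a) mpoly.
         mpoly_vars P \<subseteq> S \<and> \<not> (det (generic_matrix m S) dvd P) \<and>
         (\<forall>x :: nat \<times> nat \<Rightarrow> 'a.
            mpoly_eval x (det (generic_matrix m S)) = 0 \<and> mpoly_eval x P \<noteq> 0 \<longrightarrow>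
            (\<forall>\<psi> \<in> carrier_vec m. \<psi> \<noteq> 0\<^sub>v m \<and> eval_matrix x (generic_matrix m S) *\<^sub>v \<psi> = 0\<^sub>v m \<longrightarrow>
               (\<forall>j < m. \<psi> $ j \<noteq> 0)))"
proof -
  define G where "G = (generic_matrix m S :: (nat \<times> nat, 'a) mpoly mat)"
  have Gc: "G \<in> carrier_mat m m" unfolding G_def by (rule GM_carrier)
  have Gi: "\<And>i j. i < m \<Longrightarrow> j < m \<Longrightarrow> G $$ (i,j) = (if (i,j) \<in> S then mvar (i,j) else 0)"
    unfolding G_def by (rule GM_index)
  have Gg: "glike m G" unfolding G_def by (rule GM_glike)
  have cnz: "cofactor G 0 k \<noteq> 0" if "k < m" for k
    unfolding G_def by (rule core[OF m irr[folded G_def, unfolded G_def] that])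
  define P where "P = (\<Prod>k<m. cofactor G 0 k)"
  have m0: "0 < m" using m by simp
  have D0: "det G \<noteq> 0" using irr unfolding G_def irreducible_def by blast
  have varsG: "mpoly_vars (G $$ (i,j)) \<subseteq> S" if "i < m" "j < m" for i j
    using that by (auto simp: Gi vars_mvar)
  have vP: "mpoly_vars P \<subseteq> S"
    unfolding P_def
  proof (rule vars_prod)
    fix k assume k: "k \<in> {..<m}"
    have "mpoly_vars (det (mat_delete G 0 k)) \<subseteq> S"
    proof (rule vars_det)
      fix i j assume "i < dim_row (mat_delete G 0 k)" "j < dim_col (mat_delete G 0 k)"
      from mat_delete_entry[OF this] obtain i' j' where "i' < dim_row G" "j' < dim_col G"
        "mat_delete G 0 k $$ (i,j) = G $$ (i',j')" by blast
      thus "mpoly_vars (mat_delete G 0 k $$ (i, j)) \<subseteq> S" using Gc varsG by auto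
    qed
    thus "mpoly_vars (cofactor G 0 k) \<subseteq> S"
      unfolding cofactor_def using vars_mult[of "(-1)^(0+k)" "det (mat_delete G 0 k)"] vars_neg_one_pow[of "0+k"]
      by auto
  qed
  have Pnz: "P \<noteq> 0" unfolding P_def using cnz by (simp add: prod_zero_iff)
  obtain j0 where j0: "j0 < m" "(0,j0) \<in> S"
  proof (rule ccontr)
    assume "\<not> thesis"
    hence no: "\<And>j. j < m \<Longrightarrow> (0,j) \<notin> S" using that by blast
    have "det G = (\<Sum>j<m. G $$ (0, j) * cofactor G 0 j)" by (rule laplace_expansion_row[OF Gc m0])
    also have "\<dots> = 0" using no m0 by (simp add: Gi)
    finally show False using D0 by simp
  qed
  define v where "v = (0::nat, j0)"
  have Gv: "G $$ (0,j0) = mvar v" using Gi[OF m0 j0(1)] j0(2) by (simp add: v_def)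
  have avo: "avoids v (G $$ (i,j))" if "i < m" "j < m" "(i,j) \<noteq> (0,j0)" for i j
    using glike_avoids[OF Gg that(1,2) m0 j0(1) that(3) Gv] .
  have T: "\<exists>b. Ev v (det G) = [:b, cofactor G 0 j0:]"
    by (rule T2[OF Gc m0 j0(1) Gv avo])
  have EvP: "Ev v P = [:P:]"
  proof -
    interpret E: comm_ring_hom "Ev v :: (nat \<times> nat, 'a) mpoly \<Rightarrow> _" by (rule Ev_hom)
    interpret C: comm_ring_hom "\<lambda>a::(nat \<times> nat, 'a) mpoly. [:a:]" by (rule pconst_hom)
    have "Ev v P = (\<Prod>k<m. Ev v (cofactor G 0 k))" unfolding P_def by (rule E.hom_prod)
    also have "\<dots> = (\<Prod>k<m. [:cofactor G 0 k:])"
    proof (rule prod.cong[OF refl])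
      fix k assume k: "k \<in> {..<m}"
      show "Ev v (cofactor G 0 k) = [:cofactor G 0 k:]"
        by (rule Ev_cofactor_avoids) (use Gc k avo in auto)
    qed
    also have "\<dots> = [:P:]" unfolding P_def by (rule C.hom_prod[symmetric])
    finally show ?thesis .
  qed
  have nd: "\<not> det G dvd P"
  proof
    assume "det G dvd P"
    from T2b[OF T this Pnz EvP] cnz[OF j0(1)] show False by simp
  qed
  have zm: "\<forall>j < m. \<psi> $ j \<noteq> 0"
    if xP: "mpoly_eval x P \<noteq> 0" and psi: "\<psi> \<in> carrier_vec m" "\<psi> \<noteq> 0\<^sub>v m"
      and Apsi: "eval_matrix x G *\<^sub>v \<psi> = 0\<^sub>v m" for x :: "nat \<times> nat \<Rightarrow> 'a" and \<psi>
  proof (intro allI impI notI)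
    fix j assume j: "j < m" and pj: "\<psi> $ j = 0"
    interpret E: comm_ring_hom "mpoly_eval x :: (nat \<times> nat, 'a) mpoly \<Rightarrow> 'a" by (rule mpoly_eval_hom)
    define A where "A = eval_matrix x G"
    have Ac: "A \<in> carrier_mat m m" unfolding A_def eval_matrix_def using Gc by simp
    have eqP: "mpoly_eval x P = (\<Prod>k<m. mpoly_eval x (cofactor G 0 k))" unfolding P_def by (rule E.hom_prod)
    have pr: "(\<Prod>k<m. mpoly_eval x (cofactor G 0 k)) \<noteq> 0" using xP eqP by argo
    have "mpoly_eval x (cofactor G 0 j) \<noteq> 0"
    proof
      assume "mpoly_eval x (cofactor G 0 j) = 0"
      hence "(\<Prod>k<m. mpoly_eval x (cofactor G 0 k)) = 0" using j by (intro prod_zero) auto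
      thus False using pr by contradiction
    qed
    moreover have "mpoly_eval x (cofactor G 0 j) = cofactor A 0 j"
    proof -
      have h1: "mpoly_eval x ((-1)^(0+j)) = (-1)^(0+j)" by (simp only: E.hom_power E.hom_uminus E.hom_one)
      have h2: "mpoly_eval x (det (mat_delete G 0 j)) = det (mat_delete A 0 j)"
        unfolding A_def eval_matrix_def map_mat_delete[symmetric] by (rule E.hom_det[symmetric])
      show ?thesis unfolding cofactor_def E.hom_mult h1 h2 ..
    qed
    ultimately have cA: "cofactor A 0 j \<noteq> 0" by simp
    define Bm where "Bm = mat m m (\<lambda>(a,b). if a = 0 then (if b = j then 1 else 0) else A $$ (a,b))"
    have Bc: "Bm \<in> carrier_mat m m" unfolding Bm_def by simp
    have del: "mat_delete Bm 0 j = mat_delete A 0 j"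
      by (rule eq_matI) (use Ac in \<open>auto simp: mat_delete_def Bm_def\<close>)
    have "det Bm = (\<Sum>b<m. Bm $$ (0, b) * cofactor Bm 0 b)" by (rule laplace_expansion_row[OF Bc m0])
    also have "\<dots> = (\<Sum>b<m. if b = j then cofactor Bm 0 b else 0)"
      by (rule sum.cong[OF refl]) (use m0 in \<open>auto simp: Bm_def\<close>)
    also have "\<dots> = cofactor Bm 0 j" using j by simp
    also have "\<dots> = cofactor A 0 j" unfolding cofactor_def del ..
    finally have dB: "det Bm \<noteq> 0" using cA by simp
    have "Bm *\<^sub>v \<psi> = 0\<^sub>v m"
    proof (rule eq_vecI)
      show "dim_vec (Bm *\<^sub>v \<psi>) = dim_vec (0\<^sub>v m :: 'a vec)" using Bc by simp
      fix a assume "a < dim_vec (0\<^sub>v m :: 'a vec)"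
      hence a: "a < m" by simp
      show "(Bm *\<^sub>v \<psi>) $ a = 0\<^sub>v m $ a"
      proof (cases "a = 0")
        case True
        have "(Bm *\<^sub>v \<psi>) $ a = (\<Sum>b\<in>{0..<m}. (if b = j then 1 else 0) * \<psi> $ b)"
          using a Bc psi True unfolding Bm_def by (auto simp: scalar_prod_def intro!: sum.cong)
        also have "\<dots> = (\<Sum>b\<in>{0..<m}. if b = j then \<psi> $ b else 0)"
          by (rule sum.cong) auto
        also have "\<dots> = \<psi> $ j" using j by simp
        finally show ?thesis using pj a by simp
      next
        case False
        have "(Bm *\<^sub>v \<psi>) $ a = (A *\<^sub>v \<psi>) $ a"
          using a Bc Ac psi False unfolding Bm_def by (auto simp: scalar_prod_def intro!: sum.cong)
        also have "\<dots> = 0" using Apsi a unfolding A_def by simp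
        finally show ?thesis using a by simp
      qed
    qed
    hence "det Bm = 0" using det_0_iff_vec_prod_zero_field[OF Bc] psi by blast
    thus False using dB by simp
  qed
  show ?thesis
    by (rule exI[of _ P]) (use vP nd zm in \<open>auto simp: G_def\<close>)
qed


theorem mainTheorem2:
  fixes m :: nat and S :: "(nat \<times> nat) set"
  assumes "m \<ge> 2" and "S \<subseteq> {..<m} \<times> {..<m}"
  shows
   "(irreducible (det (generic_matrix m S :: (nat \<times> nat, real) mpoly mat)) \<longrightarrow>
      (\<exists>P :: (nat \<times> nat, real) mpoly.
         mpoly_vars P \<subseteq> S \<and> \<not> (det (generic_matrix m S) dvd P) \<and>
         (\<forall>x :: nat \<times> nat \<Rightarrow> real.
            mpoly_eval x (det (generic_matrix m S)) = 0 \<and> mpoly_eval x P \<noteq> 0 \<longrightarrow>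
            (\<forall>\<psi> \<in> carrier_vec m. \<psi> \<noteq> 0\<^sub>v m \<and> eval_matrix x (generic_matrix m S) *\<^sub>v \<psi> = 0\<^sub>v m \<longrightarrow>
               (\<forall>j < m. \<psi> $ j \<noteq> 0)))))
  \<and>
    (irreducible (det (generic_matrix m S :: (nat \<times> nat, complex) mpoly mat)) \<longrightarrow>
      (\<exists>P :: (nat \<times> nat, complex) mpoly.
         mpoly_vars P \<subseteq> S \<and> \<not> (det (generic_matrix m S) dvd P) \<and>
         (\<forall>x :: nat \<times> nat \<Rightarrow> complex.
            mpoly_eval x (det (generic_matrix m S)) = 0 \<and> mpoly_eval x P \<noteq> 0 \<longrightarrow>
            (\<forall>\<psi> \<in> carrier_vec m. \<psi> \<noteq> 0\<^sub>v m \<and> eval_matrix x (generic_matrix m S) *\<^sub>v \<psi> = 0\<^sub>v m \<longrightarrow>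
               (\<forall>j < m. \<psi> $ j \<noteq> 0)))))"
  proof (intro conjI impI)
  assume "irreducible (det (generic_matrix m S :: (nat \<times> nat, real) mpoly mat))"
  thus "\<exists>P :: (nat \<times> nat, real) mpoly.
         mpoly_vars P \<subseteq> S \<and> \<not> (det (generic_matrix m S) dvd P) \<and>
         (\<forall>x :: nat \<times> nat \<Rightarrow> real.
            mpoly_eval x (det (generic_matrix m S)) = 0 \<and> mpoly_eval x P \<noteq> 0 \<longrightarrow>
            (\<forall>\<psi> \<in> carrier_vec m. \<psi> \<noteq> 0\<^sub>v m \<and> eval_matrix x (generic_matrix m S) *\<^sub>v \<psi> = 0\<^sub>v m \<longrightarrow>
               (\<forall>j < m. \<psi> $ j \<noteq> 0)))"
    by (rule main_gen[OF assms])
next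
  assume "irreducible (det (generic_matrix m S :: (nat \<times> nat, complex) mpoly mat))"
  thus "\<exists>P :: (nat \<times> nat, complex) mpoly.
         mpoly_vars P \<subseteq> S \<and> \<not> (det (generic_matrix m S) dvd P) \<and>
         (\<forall>x :: nat \<times> nat \<Rightarrow> complex.
            mpoly_eval x (det (generic_matrix m S)) = 0 \<and> mpoly_eval x P \<noteq> 0 \<longrightarrow>
            (\<forall>\<psi> \<in> carrier_vec m. \<psi> \<noteq> 0\<^sub>v m \<and> eval_matrix x (generic_matrix m S) *\<^sub>v \<psi> = 0\<^sub>v m \<longrightarrow>
               (\<forall>j < m. \<psi> $ j \<noteq> 0)))"
    by (rule main_gen[OF assms])
qed

end
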